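(* For every $t>0$ and every fixed 2-dimensional linear subspace $L$, $$\mathbb{E}_V\bigl[\overline{\mathrm{cr}}(G_L)\,\mathrm{stress}(G,G_L)\bigr]\ge\mathbb{E}_V\,\overline{\mathrm{cr}}(G_L)\;\mathbb{E}_V\,\mathrm{stress}(G,G_L),$$ i.e. $\mathrm{Cov}_V(\overline{\mathrm{cr}}(G_L),\mathrm{stress}(G,G_L))\ge0$.
   Context: Let $W\subset\mathbb{R}^d$ ($d\ge2$) be a compact convex set with $\mathrm{vol}_d(W)=1$; for $t>0$, $V$ is a Poisson point process of intensity $t$ on $W$ (draw $N\sim\mathrm{Poisson}(t)$, then $N$ i.i.d. uniform points in $W$); $\delta_t>0$. The graph $G$ has vertex set $V$ and a straight-segment edge between distinct $u,v\in V$ iff $\|u-v\|\le\delta_t$. For a 2-dimensional linear subspace $L$, $x|_L$ denotes orthogonal projection onto $L$, $[u,v]$ the segment from $u$ to $v$, and $V^k_{\neq}$ ordered $k$-tuples of pairwise distinct points of $V$. Define $$\overline{\mathrm{cr}}(G_L)=\tfrac18\sum_{(v_1,\dots,v_4)\in V^4_{\neq}}\mathbf 1\bigl([v_1,v_2]|_L\cap[v_3,v_4]|_L\neq\emptyset\bigr)\mathbf 1(\|v_1-v_2\|\le\delta_t)\mathbf 1(\|v_3-v_4\|\le\delta_t),$$ $$\mathrm{stress}(G,G_L)=\tfrac12\sum_{(v_1,v_2)\in V^2_{\neq}}w(v_1,v_2)\bigl(d_0(v_1,v_2)-d_L(v_1,v_2)\bigr)^2,$$ with $w:W\times W\to(0,\infty)$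 measurable, $d_0(v_1,v_2)=\|v_1-v_2\|$, $d_L(v_1,v_2)=\|v_1|_L-v_2|_L\|$. Assume $\mathrm{stress}(G,G_L)$ has finite second moment. *)

theory Defs
  imports "HOL-Probability.Probability"
begin

definition oproj :: "'a::euclidean_space set \<Rightarrow> 'a \<Rightarrow> 'a" where
  "oproj L x = (THE y. y \<in> L \<and> (\<forall>z\<in>L. (x - y) \<bullet> z = 0))"

text \<open>Sample space of the Poisson process: a Poisson(t) count N together with an i.i.d.
  sequence of uniform points in W; the process is V = the first N points.\<close>
definition pp_space :: "real \<Rightarrow> 'a::euclidean_space set \<Rightarrow> (nat \<times> (nat \<Rightarrow> 'a)) measure" where
  "pp_space t W = measure_pmf (poisson_pmf t) \<Otimes>\<^sub>M (\<Pi>\<^sub>M i\<in>(UNIV::nat set). uniform_measure lborel W)"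

definition pp_points :: "nat \<times> (nat \<Rightarrow> 'a) \<Rightarrow> 'a set" where
  "pp_points \<omega> = snd \<omega> ` {..<fst \<omega>}"

definition crbar :: "'a::euclidean_space set \<Rightarrow> real \<Rightarrow> 'a set \<Rightarrow> real" where
  "crbar L \<delta> V = (1/8) * (\<Sum>(v1,v2,v3,v4) \<in> {(v1,v2,v3,v4). v1 \<in> V \<and> v2 \<in> V \<and> v3 \<in> V \<and> v4 \<in> V
        \<and> distinct [v1,v2,v3,v4]}.
     (if (oproj L ` closed_segment v1 v2) \<inter> (oproj L ` closed_segment v3 v4) \<noteq> {}
         \<and> norm (v1 - v2) \<le> \<delta> \<and> norm (v3 - v4) \<le> \<delta> then 1 else 0))"

definition stress :: "('a::euclidean_space \<Rightarrow> 'a \<Rightarrow> real) \<Rightarrow> 'a set \<Rightarrow> 'a set \<Rightarrow> real" where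
  "stress w L V = (1/2) * (\<Sum>(v1,v2) \<in> {(v1,v2). v1 \<in> V \<and> v2 \<in> V \<and> v1 \<noteq> v2}.
     w v1 v2 * (norm (v1 - v2) - norm (oproj L v1 - oproj L v2))^2)"

end

theory Submission
  imports Defs
begin


lemma inner_aux: fixes x y y' :: "'a::euclidean_space"
  assumes "(x - y') \<bullet> (y' - y) = 0" "(x - y) \<bullet> (y' - y) = 0" shows "y' = y"
proof -
  have "(y' - y) \<bullet> (y' - y) = (x - y) \<bullet> (y' - y) - (x - y') \<bullet> (y' - y)"
    by (simp only: inner_diff_left[symmetric]) (simp add: algebra_simps)
  then show ?thesis using assms by simp
qed

lemma oproj_char:
  fixes L :: "'a::euclidean_space set"
  assumes "subspace L"
  shows "oproj L x \<in> L \<and> (\<forall>z\<in>L. (x - oproj L x) \<bullet> z = 0)"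
proof -
  obtain y z where y: "y \<in> span L" and z: "\<And>w. w \<in> span L \<Longrightarrow> orthogonal z w" and xyz: "x = y + z"
    by (rule orthogonal_subspace_decomp_exists[of L x]) blast
  have sL: "span L = L" using assms by (simp add: span_eq_iff)
  have ex: "y \<in> L \<and> (\<forall>u\<in>L. (x - y) \<bullet> u = 0)"
  proof
    show "y \<in> L" using y sL by simp
    show "\<forall>u\<in>L. (x - y) \<bullet> u = 0"
    proof
      fix u assume "u \<in> L"
      then have "orthogonal z u" using z sL by simp
      moreover have "x - y = z" using xyz by simp
      ultimately show "(x - y) \<bullet> u = 0" by (simp add: orthogonal_def)
    qed
  qed
  have uniq: "y' = y" if "y' \<in> L \<and> (\<forall>u\<in>L. (x - y') \<bullet> u = 0)" for y'
  proof -
    have d: "y' - y \<in> L" using that ex assms by (simp add: subspace_diff)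
    show ?thesis by (rule inner_aux[of x]) (use that ex d in blast)+
  qed
  have "oproj L x = y" unfolding oproj_def
    by (rule the_equality) (use ex uniq in blast)+
  with ex show ?thesis by simp
qed

lemma oproj_unique:
  assumes "subspace L" "y \<in> L" "\<forall>z\<in>L. (x - y) \<bullet> z = 0"
  shows "oproj L x = y"
proof -
  note c = oproj_char[OF assms(1), of x]
  have d: "oproj L x - y \<in> L" using c assms by (simp add: subspace_diff)
  show ?thesis by (rule inner_aux[of x]) (use c assms d in blast)+
qed

lemma linear_oproj:
  assumes "subspace L" shows "linear (oproj L)"
proof
  fix x y
  note cx = oproj_char[OF assms, of x] and cy = oproj_char[OF assms, of y]
  show "oproj L (x + y) = oproj L x + oproj L y"
  proof (rule oproj_unique[OF assms])
    show "oproj L x + oproj L y \<in> L" using cx cy assms by (simp add: subspace_add)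
    show "\<forall>z\<in>L. (x + y - (oproj L x + oproj L y)) \<bullet> z = 0"
    proof
      fix z assume "z \<in> L"
      have "(x + y - (oproj L x + oproj L y)) = (x - oproj L x) + (y - oproj L y)" by (simp add: algebra_simps)
      then show "(x + y - (oproj L x + oproj L y)) \<bullet> z = 0"
        using cx cy \<open>z\<in>L\<close> by (simp only: inner_add_left)
    qed
  qed
next
  fix c x
  note cx = oproj_char[OF assms, of x]
  show "oproj L (c *\<^sub>R x) = c *\<^sub>R oproj L x"
  proof (rule oproj_unique[OF assms])
    show "c *\<^sub>R oproj L x \<in> L" using cx assms by (simp add: subspace_scale)
    show "\<forall>z\<in>L. (c *\<^sub>R x - c *\<^sub>R oproj L x) \<bullet> z = 0"
    proof
      fix z assume "z \<in> L"
      have "(c *\<^sub>R x - c *\<^sub>R oproj L x) = c *\<^sub>R (x - oproj L x)" by (simp add: algebra_simps)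
      then show "(c *\<^sub>R x - c *\<^sub>R oproj L x) \<bullet> z = 0"
        using cx \<open>z\<in>L\<close> by (simp only: inner_scaleR_left)
    qed
  qed
qed

lemma continuous_oproj:
  assumes "subspace L" shows "continuous_on UNIV (oproj L)"
  using linear_oproj[OF assms] by (simp add: linear_continuous_on linear_linear)



lemma continuous_on_oproj_comp[continuous_intros]:
  assumes "subspace L" "continuous_on S f" shows "continuous_on S (\<lambda>x. oproj L (f x))"
  using continuous_on_compose2[OF continuous_oproj[OF assms(1)] assms(2)] by simp

definition crossP :: "'a::euclidean_space set \<Rightarrow> real \<Rightarrow> 'a \<times> 'a \<times> 'a \<times> 'a \<Rightarrow> bool" where
  "crossP L \<delta> = (\<lambda>(v1,v2,v3,v4). (oproj L ` closed_segment v1 v2) \<inter> (oproj L ` closed_segment v3 v4) \<noteq> {}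
         \<and> norm (v1 - v2) \<le> \<delta> \<and> norm (v3 - v4) \<le> \<delta>)"

definition hk :: "'a::euclidean_space set \<Rightarrow> real \<Rightarrow> 'a \<times> 'a \<times> 'a \<times> 'a \<Rightarrow> real" where
  "hk L \<delta> = (\<lambda>(v1,v2,v3,v4). if distinct [v1,v2,v3,v4] \<and> crossP L \<delta> (v1,v2,v3,v4) then 1 else 0)"

lemma closed_crossP:
  fixes L :: "'a::euclidean_space set"
  assumes L: "subspace L" shows "closed {q. crossP L \<delta> q}"
proof -
  let ?S = "cbox (0::real,0::real) (1,1)"
  let ?T = "{(uv::real\<times>real, q::'a \<times> 'a \<times> 'a \<times> 'a). oproj L ((1 - fst uv) *\<^sub>R fst q + fst uv *\<^sub>R fst (snd q)) =
                      oproj L ((1 - snd uv) *\<^sub>R fst (snd (snd q)) + snd uv *\<^sub>R snd (snd (snd q)))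
}"
  have "closed ?T"
    unfolding case_prod_unfold
    by (intro closed_Collect_eq continuous_intros L)
  then have c1: "closed {q. \<exists>uv. uv \<in> ?S \<and> (uv, q) \<in> ?T}"
    by (intro closed_compact_projection) auto
  have c2: "closed {q::'a \<times> 'a \<times> 'a \<times> 'a. norm (fst q - fst (snd q)) \<le> \<delta>}"
    by (intro closed_Collect_le continuous_intros)
  have c3: "closed {q::'a \<times> 'a \<times> 'a \<times> 'a. norm (fst (snd (snd q)) - snd (snd (snd q))) \<le> \<delta>}"
    by (intro closed_Collect_le continuous_intros)
  have eq: "{q. crossP L \<delta> q} = {q. \<exists>uv. uv \<in> ?S \<and> (uv, q) \<in> ?T} \<inter>
      {q::'a \<times> 'a \<times> 'a \<times> 'a. norm (fst q - fst (snd q)) \<le> \<delta>} \<inter>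
      {q::'a \<times> 'a \<times> 'a \<times> 'a. norm (fst (snd (snd q)) - snd (snd (snd q))) \<le> \<delta>}"
  proof (intro set_eqI iffI)
    fix q assume "q \<in> {q. crossP L \<delta> q}"
    then obtain v1 v2 v3 v4 where q: "q = (v1,v2,v3,v4)" and
      ne: "(oproj L ` closed_segment v1 v2) \<inter> (oproj L ` closed_segment v3 v4) \<noteq> {}"
      and n: "norm (v1 - v2) \<le> \<delta>" "norm (v3 - v4) \<le> \<delta>"
      by (cases q) (auto simp: crossP_def)
    from ne obtain a b where a: "a \<in> closed_segment v1 v2" and b: "b \<in> closed_segment v3 v4"
      and ab: "oproj L a = oproj L b" by blast
    from a obtain u where u: "0 \<le> u" "u \<le> 1" "a = (1 - u) *\<^sub>R v1 + u *\<^sub>R v2"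
      unfolding closed_segment_def by blast
    from b obtain v where v: "0 \<le> v" "v \<le> 1" "b = (1 - v) *\<^sub>R v3 + v *\<^sub>R v4"
      unfolding closed_segment_def by blast
    show "q \<in> {q. \<exists>uv. uv \<in> ?S \<and> (uv, q) \<in> ?T} \<inter>
      {q::'a \<times> 'a \<times> 'a \<times> 'a. norm (fst q - fst (snd q)) \<le> \<delta>} \<inter>
      {q::'a \<times> 'a \<times> 'a \<times> 'a. norm (fst (snd (snd q)) - snd (snd (snd q))) \<le> \<delta>}"
      using u v ab n q by (auto intro!: exI[of _ "(u,v)"] simp: cbox_Pair_iff)
  next
    fix q assume "q \<in> {q. \<exists>uv. uv \<in> ?S \<and> (uv, q) \<in> ?T} \<inter>
      {q::'a \<times> 'a \<times> 'a \<times> 'a. norm (fst q - fst (snd q)) \<le> \<delta>} \<inter>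
      {q::'a \<times> 'a \<times> 'a \<times> 'a. norm (fst (snd (snd q)) - snd (snd (snd q))) \<le> \<delta>}"
    then obtain v1 v2 v3 v4 u v where q: "q = (v1,v2,v3,v4)" and uv: "(u,v) \<in> ?S"
      and eqp: "oproj L ((1 - u) *\<^sub>R v1 + u *\<^sub>R v2) = oproj L ((1 - v) *\<^sub>R v3 + v *\<^sub>R v4)"
      and n: "norm (v1 - v2) \<le> \<delta>" "norm (v3 - v4) \<le> \<delta>"
      by (cases q) auto
    have "(1 - u) *\<^sub>R v1 + u *\<^sub>R v2 \<in> closed_segment v1 v2"
      using uv unfolding closed_segment_def by (auto simp: cbox_Pair_iff)
    moreover have "(1 - v) *\<^sub>R v3 + v *\<^sub>R v4 \<in> closed_segment v3 v4"
      using uv unfolding closed_segment_def by (auto simp: cbox_Pair_iff)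
    ultimately show "q \<in> {q. crossP L \<delta> q}"
      using eqp n q unfolding crossP_def by auto
  qed
  show ?thesis unfolding eq by (intro closed_Int c1 c2 c3)
qed

lemma open_distinct4: "open {q::'a::euclidean_space \<times> 'a \<times> 'a \<times> 'a. distinct [fst q, fst (snd q), fst (snd (snd q)), snd (snd (snd q))]}"
proof -
  have "{q::'a::euclidean_space \<times> 'a \<times> 'a \<times> 'a. distinct [fst q, fst (snd q), fst (snd (snd q)), snd (snd (snd q))]}
     = {q. fst q \<noteq> fst (snd q) \<and> fst q \<noteq> fst (snd (snd q)) \<and> fst q \<noteq> snd (snd (snd q)) \<and>
           fst (snd q) \<noteq> fst (snd (snd q)) \<and> fst (snd q) \<noteq> snd (snd (snd q)) \<and> fst (snd (snd q)) \<noteq> snd (snd (snd q))}"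
    by auto
  also have "open \<dots>" by (intro open_Collect_conj open_Collect_neq continuous_intros)
  finally show ?thesis .
qed

lemma hk_eq: "hk L \<delta> = indicator ({q. crossP L \<delta> q} \<inter> {q. distinct [fst q, fst (snd q), fst (snd (snd q)), snd (snd (snd q))]})"
  by (auto simp: hk_def fun_eq_iff split: split_indicator)

lemma hk_measurable[measurable]:
  assumes "subspace L" shows "hk L \<delta> \<in> borel_measurable borel"
  unfolding hk_eq
  by (intro borel_measurable_indicator sets.Int borel_closed borel_open closed_crossP assms open_distinct4)

lemma hk_nonneg: "0 \<le> hk L \<delta> q" and hk_le1: "hk L \<delta> q \<le> 1"
  by (auto simp: hk_def split: prod.splits)



lemma reindex_nn:
  fixes U :: "'a measure"
  assumes U: "prob_space U" and xs: "distinct xs" "length xs = k"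
    and F: "F \<in> borel_measurable (PiM {..<k} (\<lambda>_. U))"
  shows "(\<integral>\<^sup>+X. F (\<lambda>i\<in>{..<k}. X (xs!i)) \<partial>PiM UNIV (\<lambda>_. U)) = (\<integral>\<^sup>+Y. F Y \<partial>PiM {..<k} (\<lambda>_. U))"
proof -
  have inj: "inj_on (\<lambda>i. xs ! i) {..<k}" using xs by (auto simp: inj_on_def nth_eq_iff_index_eq)
  have d: "distr (PiM UNIV (\<lambda>_. U)) (\<Pi>\<^sub>M i\<in>{..<k}. U) (\<lambda>\<omega>. \<lambda>n\<in>{..<k}. \<omega> (xs ! n)) = (\<Pi>\<^sub>M i\<in>{..<k}. U)"
    using distr_PiM_reindex[of UNIV "\<lambda>_. U" "\<lambda>i. xs ! i" "{..<k}"] U inj by simp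
  have m: "(\<lambda>\<omega>. \<lambda>n\<in>{..<k}. \<omega> (xs ! n)) \<in> measurable (PiM UNIV (\<lambda>_. U)) (\<Pi>\<^sub>M i\<in>{..<k}. U)"
    by (intro measurable_restrict measurable_component_singleton) auto
  have "(\<integral>\<^sup>+Y. F Y \<partial>PiM {..<k} (\<lambda>_. U)) = (\<integral>\<^sup>+Y. F Y \<partial>distr (PiM UNIV (\<lambda>_. U)) (\<Pi>\<^sub>M i\<in>{..<k}. U) (\<lambda>\<omega>. \<lambda>n\<in>{..<k}. \<omega> (xs ! n)))"
    using d by simp
  also have "\<dots> = (\<integral>\<^sup>+X. F (\<lambda>i\<in>{..<k}. X (xs!i)) \<partial>PiM UNIV (\<lambda>_. U))"
    by (rule nn_integral_distr[OF m]) (use F d in simp)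
  finally show ?thesis by simp
qed

lemma reindex_nn2:
  fixes U :: "'a measure"
  assumes U: "prob_space U" and xs: "distinct xs" "length xs = k" and ys: "distinct ys" "length ys = k"
    and F: "F \<in> borel_measurable (PiM {..<k} (\<lambda>_. U))"
  shows "(\<integral>\<^sup>+X. F (\<lambda>i\<in>{..<k}. X (xs!i)) \<partial>PiM UNIV (\<lambda>_. U)) = (\<integral>\<^sup>+X. F (\<lambda>i\<in>{..<k}. X (ys!i)) \<partial>PiM UNIV (\<lambda>_. U))"
  using reindex_nn[OF U xs F] reindex_nn[OF U ys F] by simp

lemma indep_coords:
  fixes U :: "'a measure"
  assumes U: "prob_space U"
  shows "prob_space.indep_vars (PiM (UNIV::nat set) (\<lambda>_. U)) (\<lambda>_. U) (\<lambda>i X. X i) UNIV"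
proof -
  interpret P: prob_space "PiM UNIV (\<lambda>_. U)" by (intro prob_space_PiM U)
  have 1: "distr (PiM UNIV (\<lambda>_. U)) (PiM UNIV (\<lambda>_. U)) (\<lambda>x. restrict x UNIV) = PiM UNIV (\<lambda>_. U)"
    by (simp add: restrict_UNIV distr_id2)
  have 2: "PiM UNIV (\<lambda>i. distr (PiM UNIV (\<lambda>_. U)) U (\<lambda>X. X i)) = PiM (UNIV::nat set) (\<lambda>_. U)"
    by (intro PiM_cong refl distr_PiM_component U) auto
  show ?thesis
    by (subst P.indep_vars_iff_distr_eq_PiM) (simp_all add: 1 2)
qed

lemma indep_product_nn:
  fixes U :: "'a measure" and f g :: "(nat \<Rightarrow> 'a) \<Rightarrow> ennreal"
  assumes U: "prob_space U" and AB: "A \<inter> B = {}"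
    and f: "f \<in> borel_measurable (PiM A (\<lambda>_. U))" and g: "g \<in> borel_measurable (PiM B (\<lambda>_. U))"
  shows "(\<integral>\<^sup>+X. f (restrict X A) * g (restrict X B) \<partial>PiM UNIV (\<lambda>_. U))
       = (\<integral>\<^sup>+X. f (restrict X A) \<partial>PiM UNIV (\<lambda>_. U)) * (\<integral>\<^sup>+X. g (restrict X B) \<partial>PiM UNIV (\<lambda>_. U))"
proof -
  interpret P: prob_space "PiM UNIV (\<lambda>_. U)" by (intro prob_space_PiM U)
  have iv: "P.indep_var (PiM A (\<lambda>_. U)) (\<lambda>\<omega>. restrict (\<lambda>i. \<omega> i) A) (PiM B (\<lambda>_. U)) (\<lambda>\<omega>. restrict (\<lambda>i. \<omega> i) B)"
    by (rule P.indep_var_restrict[OF indep_coords[OF U] AB]) auto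
  have iv2: "P.indep_var borel (f \<circ> (\<lambda>\<omega>. restrict (\<lambda>i. \<omega> i) A)) borel (g \<circ> (\<lambda>\<omega>. restrict (\<lambda>i. \<omega> i) B))"
    by (rule P.indep_var_compose[OF iv f g])
  have **: "(\<lambda> _. borel) = case_bool borel borel"
    by (rule ext, metis (full_types) bool.simps(3) bool.simps(4))
  have iv3: "P.indep_vars (\<lambda>_. borel) (case_bool (\<lambda>X. f (restrict X A)) (\<lambda>X. g (restrict X B))) UNIV"
    using iv2 unfolding P.indep_var_def ** by (simp add: comp_def)
  have "(\<integral>\<^sup>+X. (\<Prod>i\<in>UNIV. case_bool (\<lambda>X. f (restrict X A)) (\<lambda>X. g (restrict X B)) i X) \<partial>PiM UNIV (\<lambda>_. U))
    = (\<Prod>i\<in>UNIV. \<integral>\<^sup>+X. case_bool (\<lambda>X. f (restrict X A)) (\<lambda>X. g (restrict X B)) i X \<partial>PiM UNIV (\<lambda>_. U))"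
    using iv3 by (intro P.indep_vars_nn_integral) auto
  then show ?thesis by (simp add: UNIV_bool mult.commute)
qed



definition DL :: "nat \<Rightarrow> nat \<Rightarrow> nat list set" where
  "DL n k = {xs. length xs = k \<and> distinct xs \<and> set xs \<subseteq> {..<n}}"

lemma finite_DL: "finite (DL n k)"
proof -
  have "DL n k \<subseteq> {xs. set xs \<subseteq> {..<n} \<and> length xs = k}" by (auto simp: DL_def)
  moreover have "finite {xs. set xs \<subseteq> {..<n} \<and> length xs = k}" by (rule finite_lists_length_eq) simp
  ultimately show ?thesis by (rule finite_subset)
qed

context
  fixes U :: "'a::euclidean_space measure" and h :: "'a \<times> 'a \<times> 'a \<times> 'a \<Rightarrow> real" and s :: "'a \<times> 'a \<Rightarrow> real"
  assumes U: "prob_space U" and sU: "sets U = sets borel"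
    and hm: "h \<in> borel_measurable borel" and sm: "s \<in> borel_measurable borel"
    and hn: "\<And>q. 0 \<le> h q" and sn: "\<And>q. 0 \<le> s q"
begin

lemma comp_meas: "i \<in> I \<Longrightarrow> (\<lambda>Y. Y i) \<in> measurable (PiM I (\<lambda>_. U)) borel"
  using measurable_component_singleton[of i I "\<lambda>_. U"] measurable_cong_sets[OF refl sU] by blast

lemma tup4_meas: assumes "a \<in> I" "b \<in> I" "c \<in> I" "d \<in> I"
  shows "(\<lambda>Y. (Y a, Y b, Y c, Y d)) \<in> measurable (PiM I (\<lambda>_. U)) borel"
proof -
  have "(\<lambda>Y. (Y a, Y b, Y c, Y d)) \<in> measurable (PiM I (\<lambda>_. U)) (borel \<Otimes>\<^sub>M (borel \<Otimes>\<^sub>M (borel \<Otimes>\<^sub>M borel)))"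
    by (intro measurable_Pair comp_meas assms)
  then show ?thesis by (simp only: borel_prod)
qed

lemma tup2_meas: assumes "a \<in> I" "b \<in> I"
  shows "(\<lambda>Y. (Y a, Y b)) \<in> measurable (PiM I (\<lambda>_. U)) borel"
proof -
  have "(\<lambda>Y. (Y a, Y b)) \<in> measurable (PiM I (\<lambda>_. U)) (borel \<Otimes>\<^sub>M borel)"
    by (intro measurable_Pair comp_meas assms)
  then show ?thesis by (simp only: borel_prod)
qed

lemma h_meas: assumes "a \<in> I" "b \<in> I" "c \<in> I" "d \<in> I"
  shows "(\<lambda>Y. h (Y a, Y b, Y c, Y d)) \<in> borel_measurable (PiM I (\<lambda>_. U))"
  using measurable_comp[OF tup4_meas[OF assms] hm] by (simp add: comp_def)

lemma s_meas: assumes "a \<in> I" "b \<in> I"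
  shows "(\<lambda>Y. s (Y a, Y b)) \<in> borel_measurable (PiM I (\<lambda>_. U))"
  using measurable_comp[OF tup2_meas[OF assms] sm] by (simp add: comp_def)

lemma eh_meas: assumes "a \<in> I" "b \<in> I" "c \<in> I" "d \<in> I"
  shows "(\<lambda>Y. ennreal (h (Y a, Y b, Y c, Y d))) \<in> borel_measurable (PiM I (\<lambda>_. U))"
  using measurable_comp[OF h_meas[OF assms] measurable_ennreal] by (simp add: comp_def)

lemma es_meas: assumes "a \<in> I" "b \<in> I"
  shows "(\<lambda>Y. ennreal (s (Y a, Y b))) \<in> borel_measurable (PiM I (\<lambda>_. U))"
  using measurable_comp[OF s_meas[OF assms] measurable_ennreal] by (simp add: comp_def)

definition "HH = (\<integral>\<^sup>+X. ennreal (h (X 0, X 1, X 2, X 3)) \<partial>PiM (UNIV::nat set) (\<lambda>_. U))"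
definition "SS = (\<integral>\<^sup>+X. ennreal (s (X 0, X 1)) \<partial>PiM (UNIV::nat set) (\<lambda>_. U))"

lemma term4: assumes "xs \<in> DL n 4"
  shows "(\<integral>\<^sup>+X. ennreal (h (X(xs!0), X(xs!1), X(xs!2), X(xs!3))) \<partial>PiM (UNIV::nat set) (\<lambda>_. U)) = HH"
proof -
  have "distinct xs" "length xs = 4" using assms by (auto simp: DL_def)
  from reindex_nn2[OF U this, of "[0,1,2,3::nat]" "\<lambda>Y. ennreal (h (Y 0, Y 1, Y 2, Y 3))"]
  show ?thesis unfolding HH_def by (simp add: eh_meas)
qed

lemma term2: assumes "xs \<in> DL n 2"
  shows "(\<integral>\<^sup>+X. ennreal (s (X(xs!0), X(xs!1))) \<partial>PiM (UNIV::nat set) (\<lambda>_. U)) = SS"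
proof -
  have "distinct xs" "length xs = 2" using assms by (auto simp: DL_def)
  from reindex_nn2[OF U this, of "[0,1::nat]" "\<lambda>Y. ennreal (s (Y 0, Y 1))"]
  show ?thesis unfolding SS_def by (simp add: es_meas)
qed

lemma int_sum4: "(\<integral>\<^sup>+X. ennreal (\<Sum>xs\<in>DL n 4. h (X(xs!0), X(xs!1), X(xs!2), X(xs!3))) \<partial>PiM (UNIV::nat set) (\<lambda>_. U))
   = of_nat (card (DL n 4)) * HH"
proof -
  have "(\<integral>\<^sup>+X. ennreal (\<Sum>xs\<in>DL n 4. h (X(xs!0), X(xs!1), X(xs!2), X(xs!3))) \<partial>PiM (UNIV::nat set) (\<lambda>_. U))
     = (\<integral>\<^sup>+X. (\<Sum>xs\<in>DL n 4. ennreal (h (X(xs!0), X(xs!1), X(xs!2), X(xs!3)))) \<partial>PiM (UNIV::nat set) (\<lambda>_. U))"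
    by (simp add: hn)
  also have "\<dots> = (\<Sum>xs\<in>DL n 4. \<integral>\<^sup>+X. ennreal (h (X(xs!0), X(xs!1), X(xs!2), X(xs!3))) \<partial>PiM (UNIV::nat set) (\<lambda>_. U))"
    by (intro nn_integral_sum eh_meas) auto
  also have "\<dots> = (\<Sum>xs\<in>DL n 4. HH)" by (intro sum.cong refl term4)
  finally show ?thesis by simp
qed

lemma int_sum2: "(\<integral>\<^sup>+X. ennreal (\<Sum>xs\<in>DL n 2. s (X(xs!0), X(xs!1))) \<partial>PiM (UNIV::nat set) (\<lambda>_. U))
   = of_nat (card (DL n 2)) * SS"
proof -
  have "(\<integral>\<^sup>+X. ennreal (\<Sum>xs\<in>DL n 2. s (X(xs!0), X(xs!1))) \<partial>PiM (UNIV::nat set) (\<lambda>_. U))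
     = (\<integral>\<^sup>+X. (\<Sum>xs\<in>DL n 2. ennreal (s (X(xs!0), X(xs!1)))) \<partial>PiM (UNIV::nat set) (\<lambda>_. U))"
    by (simp add: sn)
  also have "\<dots> = (\<Sum>xs\<in>DL n 2. \<integral>\<^sup>+X. ennreal (s (X(xs!0), X(xs!1))) \<partial>PiM (UNIV::nat set) (\<lambda>_. U))"
    by (intro nn_integral_sum es_meas) auto
  also have "\<dots> = (\<Sum>xs\<in>DL n 2. SS)" by (intro sum.cong refl term2)
  finally show ?thesis by simp
qed

definition "HS = (\<integral>\<^sup>+X. ennreal (h (X 0, X 1, X 2, X 3) * s (X 4, X 5)) \<partial>PiM (UNIV::nat set) (\<lambda>_. U))"

lemma HS_eq: "HS = HH * SS"
proof -
  have f: "(\<lambda>Y. ennreal (h (Y 0, Y 1, Y 2, Y 3))) \<in> borel_measurable (PiM {..<4::nat} (\<lambda>_. U))"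
    by (rule eh_meas) auto
  have g: "(\<lambda>Y. ennreal (s (Y 4, Y 5))) \<in> borel_measurable (PiM {4,5::nat} (\<lambda>_. U))"
    by (rule es_meas) auto
  have "HS = (\<integral>\<^sup>+X. ennreal (h (restrict X {..<4} 0, restrict X {..<4} 1, restrict X {..<4} 2, restrict X {..<4} 3))
        * ennreal (s (restrict X {4,5} 4, restrict X {4,5} 5)) \<partial>PiM (UNIV::nat set) (\<lambda>_. U))"
    unfolding HS_def by (intro nn_integral_cong) (simp add: ennreal_mult hn sn)
  also have "\<dots> = (\<integral>\<^sup>+X. ennreal (h (restrict X {..<4} 0, restrict X {..<4} 1, restrict X {..<4} 2, restrict X {..<4} 3))
        \<partial>PiM (UNIV::nat set) (\<lambda>_. U)) * (\<integral>\<^sup>+X. ennreal (s (restrict X {4,5} 4, restrict X {4,5} 5)) \<partial>PiM (UNIV::nat set) (\<lambda>_. U))"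
    by (rule indep_product_nn[OF U _ f g]) auto
  also have "(\<integral>\<^sup>+X. ennreal (h (restrict X {..<4} 0, restrict X {..<4} 1, restrict X {..<4} 2, restrict X {..<4} 3))
        \<partial>PiM (UNIV::nat set) (\<lambda>_. U)) = HH" unfolding HH_def by simp
  also have "(\<integral>\<^sup>+X. ennreal (s (restrict X {4,5} 4, restrict X {4,5} 5)) \<partial>PiM (UNIV::nat set) (\<lambda>_. U)) = SS"
  proof -
    have "(\<integral>\<^sup>+X. ennreal (s (restrict X {4,5} 4, restrict X {4,5} 5)) \<partial>PiM (UNIV::nat set) (\<lambda>_. U))
      = (\<integral>\<^sup>+X. ennreal (s (X ([4,5::nat]!0), X ([4,5::nat]!1))) \<partial>PiM (UNIV::nat set) (\<lambda>_. U))" by simp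
    also have "\<dots> = SS" by (rule term2[of _ 6]) (auto simp: DL_def)
    finally show ?thesis .
  qed
  finally show ?thesis .
qed

lemma term6: assumes "zs \<in> DL n 6"
  shows "(\<integral>\<^sup>+X. ennreal (h (X(zs!0), X(zs!1), X(zs!2), X(zs!3)) * s (X(zs!4), X(zs!5))) \<partial>PiM (UNIV::nat set) (\<lambda>_. U)) = HS"
proof -
  have "distinct zs" "length zs = 6" using assms by (auto simp: DL_def)
  moreover have "(\<lambda>Y. ennreal (h (Y 0, Y 1, Y 2, Y 3) * s (Y 4, Y 5))) \<in> borel_measurable (PiM {..<6::nat} (\<lambda>_. U))"
    using measurable_comp[OF borel_measurable_times[OF h_meas s_meas] measurable_ennreal, of 0 "{..<6::nat}" 1 2 3 4 5]
    by (simp add: comp_def)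
  ultimately have "(\<integral>\<^sup>+X. ennreal (h (X(zs!0), X(zs!1), X(zs!2), X(zs!3)) * s (X(zs!4), X(zs!5))) \<partial>PiM (UNIV::nat set) (\<lambda>_. U))
     = (\<integral>\<^sup>+X. ennreal (h (X([0,1,2,3,4,5::nat]!0), X([0,1,2,3,4,5::nat]!1), X([0,1,2,3,4,5::nat]!2), X([0,1,2,3,4,5::nat]!3))
        * s (X([0,1,2,3,4,5::nat]!4), X([0,1,2,3,4,5::nat]!5))) \<partial>PiM (UNIV::nat set) (\<lambda>_. U))"
    using reindex_nn2[OF U \<open>distinct zs\<close> \<open>length zs = 6\<close>, of "[0,1,2,3,4,5::nat]" "\<lambda>Y. ennreal (h (Y 0, Y 1, Y 2, Y 3) * s (Y 4, Y 5))"]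
    by (simp add: numeral_eq_Suc)
  also have "\<dots> = HS" unfolding HS_def by (simp add: numeral_eq_Suc)
  finally show ?thesis .
qed

lemma prod_lower:
  "(\<Sum>zs\<in>DL n 6. h (X(zs!0), X(zs!1), X(zs!2), X(zs!3)) * s (X(zs!4), X(zs!5)))
   \<le> (\<Sum>xs\<in>DL n 4. h (X(xs!0), X(xs!1), X(xs!2), X(xs!3))) * (\<Sum>ys\<in>DL n 2. s (X(ys!0), X(ys!1)))"
proof -
  let ?T = "\<lambda>p. h (X(fst p!0), X(fst p!1), X(fst p!2), X(fst p!3)) * s (X(snd p!0), X(snd p!1))"
  let ?\<phi> = "\<lambda>zs::nat list. (take 4 zs, drop 4 zs)"
  have inj: "inj_on ?\<phi> (DL n 6)"
    by (rule inj_onI) (metis append_take_drop_id prod.inject)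
  have sub: "?\<phi> ` DL n 6 \<subseteq> DL n 4 \<times> DL n 2"
    by (auto simp: DL_def dest: in_set_takeD in_set_dropD)
  have "(\<Sum>zs\<in>DL n 6. h (X(zs!0), X(zs!1), X(zs!2), X(zs!3)) * s (X(zs!4), X(zs!5)))
      = (\<Sum>zs\<in>DL n 6. ?T (?\<phi> zs))"
  proof (intro sum.cong refl)
    fix zs assume "zs \<in> DL n 6"
    then have "length zs = 6" by (simp add: DL_def)
    then show "h (X(zs!0), X(zs!1), X(zs!2), X(zs!3)) * s (X(zs!4), X(zs!5)) = ?T (?\<phi> zs)"
      by simp
  qed
  also have "\<dots> = (\<Sum>p\<in>?\<phi> ` DL n 6. ?T p)" by (rule sum.reindex[OF inj, symmetric, unfolded comp_def])
  also have "\<dots> \<le> (\<Sum>p\<in>DL n 4 \<times> DL n 2. ?T p)"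
    by (intro sum_mono2 sub finite_cartesian_product finite_DL) (auto intro!: mult_nonneg_nonneg hn sn)
  also have "\<dots> = (\<Sum>xs\<in>DL n 4. h (X(xs!0), X(xs!1), X(xs!2), X(xs!3))) * (\<Sum>ys\<in>DL n 2. s (X(ys!0), X(ys!1)))"
    by (simp add: sum_product sum.cartesian_product case_prod_unfold)
  finally show ?thesis .
qed

lemma int_prod: "of_nat (card (DL n 6)) * HH * SS \<le>
  (\<integral>\<^sup>+X. ennreal ((\<Sum>xs\<in>DL n 4. h (X(xs!0), X(xs!1), X(xs!2), X(xs!3))) * (\<Sum>ys\<in>DL n 2. s (X(ys!0), X(ys!1)))) \<partial>PiM (UNIV::nat set) (\<lambda>_. U))"
proof -
  have "of_nat (card (DL n 6)) * HH * SS = (\<Sum>zs\<in>DL n 6. HS)" by (simp add: HS_eq mult.assoc)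
  also have "\<dots> = (\<Sum>zs\<in>DL n 6. \<integral>\<^sup>+X. ennreal (h (X(zs!0), X(zs!1), X(zs!2), X(zs!3)) * s (X(zs!4), X(zs!5))) \<partial>PiM (UNIV::nat set) (\<lambda>_. U))"
    by (intro sum.cong refl term6[symmetric])
  also have "\<dots> = (\<integral>\<^sup>+X. (\<Sum>zs\<in>DL n 6. ennreal (h (X(zs!0), X(zs!1), X(zs!2), X(zs!3)) * s (X(zs!4), X(zs!5)))) \<partial>PiM (UNIV::nat set) (\<lambda>_. U))"
    by (intro nn_integral_sum[symmetric] measurable_comp[OF borel_measurable_times[OF h_meas s_meas] measurable_ennreal, unfolded comp_def]) auto
  also have "\<dots> \<le> (\<integral>\<^sup>+X. ennreal ((\<Sum>xs\<in>DL n 4. h (X(xs!0), X(xs!1), X(xs!2), X(xs!3))) * (\<Sum>ys\<in>DL n 2. s (X(ys!0), X(ys!1)))) \<partial>PiM (UNIV::nat set) (\<lambda>_. U))"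
  proof (intro nn_integral_mono)
    fix X :: "nat \<Rightarrow> 'a"
    have "(\<Sum>zs\<in>DL n 6. ennreal (h (X(zs!0), X(zs!1), X(zs!2), X(zs!3)) * s (X(zs!4), X(zs!5))))
       = ennreal (\<Sum>zs\<in>DL n 6. h (X(zs!0), X(zs!1), X(zs!2), X(zs!3)) * s (X(zs!4), X(zs!5)))"
      by (intro sum_ennreal mult_nonneg_nonneg hn sn)
    also have "\<dots> \<le> ennreal ((\<Sum>xs\<in>DL n 4. h (X(xs!0), X(xs!1), X(xs!2), X(xs!3))) * (\<Sum>ys\<in>DL n 2. s (X(ys!0), X(ys!1))))"
      by (intro ennreal_leI prod_lower)
    finally show "(\<Sum>zs\<in>DL n 6. ennreal (h (X(zs!0), X(zs!1), X(zs!2), X(zs!3)) * s (X(zs!4), X(zs!5))))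
       \<le> ennreal ((\<Sum>xs\<in>DL n 4. h (X(xs!0), X(xs!1), X(xs!2), X(xs!3))) * (\<Sum>ys\<in>DL n 2. s (X(ys!0), X(ys!1))))" .
  qed
  finally show ?thesis .
qed

end


lemma DL_empty: "n < k \<Longrightarrow> DL n k = {}"
proof (rule ccontr)
  assume "n < k" "DL n k \<noteq> {}"
  then obtain xs where xs: "length xs = k" "distinct xs" "set xs \<subseteq> {..<n}" by (auto simp: DL_def)
  then have "card (set xs) \<le> card {..<n}" by (intro card_mono) auto
  with xs distinct_card[of xs] \<open>n < k\<close> show False by simp
qed

lemma card_DL_eq: "k \<le> n \<Longrightarrow> card (DL n k) = \<Prod>{n - k + 1 .. n}"
  unfolding DL_def using card_lists_distinct_length_eq[of "{..<n}" k] by simp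

lemma card_DL_real: assumes "k \<le> n" shows "real (card (DL n k)) * fact (n - k) = fact n"
proof -
  have N: "(fact n::nat) = fact (n - k) * \<Prod>{Suc (n - k)..n}"
    using fact_eq_fact_times[of "n - k" n] assms by simp
  have "(fact n::real) = of_nat (fact n::nat)" by simp
  also have "\<dots> = (fact (n - k) :: real) * of_nat (\<Prod>{Suc (n - k)..n})"
    by (simp only: N of_nat_mult of_nat_fact)
  finally have "fact n = (fact (n - k) :: real) * of_nat (\<Prod>{Suc (n - k)..n})" .
  then show ?thesis using card_DL_eq[OF assms] by (simp add: mult.commute)
qed

lemma pois_sums:
  fixes t :: real assumes t: "0 < t"
  shows "(\<lambda>n. t ^ n / fact n * exp (- t) * real (card (DL n k))) sums (t ^ k)"
proof -
  let ?g = "\<lambda>n. t ^ n / fact n * exp (- t) * real (card (DL n k))"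
  have shift: "?g (i + k) = (t ^ k * exp (- t)) * (t ^ i /\<^sub>R fact i)" for i
  proof -
    have c: "real (card (DL (i + k) k)) * fact i = fact (i + k)" using card_DL_real[of k "i + k"] by simp
    have "?g (i + k) = t ^ (i + k) / fact (i + k) * exp (- t) * real (card (DL (i + k) k))" by simp
    also have "real (card (DL (i + k) k)) = fact (i + k) / fact i" using c by (simp add: eq_divide_eq)
    finally show ?thesis using c by (simp add: power_add divide_simps)
  qed
  have "(\<lambda>i. (t ^ k * exp (- t)) * (t ^ i /\<^sub>R fact i)) sums ((t ^ k * exp (- t)) * exp t)"
    by (intro sums_mult exp_converges)
  moreover have "(t ^ k * exp (- t)) * exp t = t ^ k" by (simp add: mult.assoc flip: exp_add)
  moreover have eqf: "(\<lambda>i. ?g (i + k)) = (\<lambda>i. (t ^ k * exp (- t)) * (t ^ i /\<^sub>R fact i))"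
    by (rule ext) (rule shift)
  ultimately have "(\<lambda>i. ?g (i + k)) sums (t ^ k)" by (simp only: eqf)
  moreover have "(\<Sum>i<k. ?g i) = 0" by (intro sum.neutral) (auto simp: DL_empty)
  ultimately show ?thesis using sums_iff_shift[of ?g k "t ^ k"] by simp
qed

lemma pois_mom:
  fixes t :: real assumes t: "0 < t"
  shows "(\<integral>\<^sup>+n. ennreal (real (card (DL n k))) \<partial>measure_pmf (poisson_pmf t)) = ennreal (t ^ k)"
proof -
  have "(\<integral>\<^sup>+n. ennreal (real (card (DL n k))) \<partial>measure_pmf (poisson_pmf t))
     = (\<integral>\<^sup>+n. ennreal (t ^ n / fact n * exp (- t) * real (card (DL n k))) \<partial>count_space UNIV)"
    using t by (simp add: nn_integral_measure_pmf ennreal_mult[symmetric])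
  also have "\<dots> = (\<Sum>n. ennreal (t ^ n / fact n * exp (- t) * real (card (DL n k))))"
    by (rule nn_integral_count_space_nat)
  also have "\<dots> = ennreal (\<Sum>n. t ^ n / fact n * exp (- t) * real (card (DL n k)))"
    using t pois_sums[OF t, of k] by (intro suminf_ennreal2) (auto simp: sums_iff)
  also have "\<dots> = ennreal (t ^ k)" using pois_sums[OF t, of k] by (simp add: sums_iff)
  finally show ?thesis .
qed

lemma pow_le_exp: assumes "0 \<le> (x::real)" shows "x ^ m \<le> fact m * exp x"
proof -
  have "x ^ m /\<^sub>R fact m = (\<Sum>i\<in>{m}. x ^ i /\<^sub>R fact i)" by simp
  also have "\<dots> \<le> (\<Sum>i. x ^ i /\<^sub>R fact i)"
    using assms by (intro sum_le_suminf summable_exp_generic) auto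
  also have "\<dots> = exp x" using exp_converges[of x] by (simp add: sums_iff)
  finally show ?thesis by (simp add: field_simps)
qed

lemma pois_pow_finite:
  fixes t :: real assumes t: "0 < t"
  shows "(\<integral>\<^sup>+n. ennreal (real n ^ m) \<partial>measure_pmf (poisson_pmf t)) < \<infinity>"
proof -
  have "(\<integral>\<^sup>+n. ennreal (real n ^ m) \<partial>measure_pmf (poisson_pmf t))
     \<le> (\<integral>\<^sup>+n. ennreal (fact m * exp 1 ^ n) \<partial>measure_pmf (poisson_pmf t))"
  proof (intro nn_integral_mono ennreal_leI)
    fix n :: nat
    have "exp (real n) = exp 1 ^ n" using exp_of_nat_mult[of n 1] by simp
    then show "real n ^ m \<le> fact m * exp 1 ^ n" using pow_le_exp[of "real n" m] by simp
  qed
  also have "\<dots> = (\<integral>\<^sup>+n. ennreal (fact m * exp (- t) * ((exp 1 * t) ^ n /\<^sub>R fact n)) \<partial>count_space UNIV)"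
    using t by (simp add: nn_integral_measure_pmf ennreal_mult[symmetric] power_mult_distrib field_simps)
  also have "\<dots> = (\<Sum>n. ennreal (fact m * exp (- t) * ((exp 1 * t) ^ n /\<^sub>R fact n)))"
    by (rule nn_integral_count_space_nat)
  also have "\<dots> = ennreal (\<Sum>n. fact m * exp (- t) * ((exp 1 * t) ^ n /\<^sub>R fact n))"
    using t by (intro suminf_ennreal2 summable_mult summable_exp_generic) auto
  also have "\<dots> < \<infinity>" by simp
  finally show ?thesis .
qed



lemma AE_diag:
  fixes U :: "'a::euclidean_space measure"
  assumes U: "prob_space U" and sU: "sets U = sets borel" and nat: "\<And>c. AE x in U. x \<noteq> c"
    and ij: "i \<noteq> j"
  shows "AE X in PiM (UNIV::nat set) (\<lambda>_. U). X i \<noteq> X j"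
proof -
  interpret P: prob_space "PiM (UNIV::nat set) (\<lambda>_. U)" by (intro prob_space_PiM U)
  interpret UU: pair_prob_space U U using U by (simp add: pair_prob_space_def pair_sigma_finite_def prob_space_imp_sigma_finite)
  have iv: "P.indep_var (PiM {i} (\<lambda>_. U)) (\<lambda>\<omega>. restrict (\<lambda>k. \<omega> k) {i}) (PiM {j} (\<lambda>_. U)) (\<lambda>\<omega>. restrict (\<lambda>k. \<omega> k) {j})"
    by (rule P.indep_var_restrict[OF indep_coords[OF U]]) (use ij in auto)
  have iv2: "P.indep_var U ((\<lambda>Y. Y i) \<circ> (\<lambda>\<omega>. restrict (\<lambda>k. \<omega> k) {i})) U ((\<lambda>Y. Y j) \<circ> (\<lambda>\<omega>. restrict (\<lambda>k. \<omega> k) {j}))"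
    by (rule P.indep_var_compose[OF iv]) (auto intro: measurable_component_singleton)
  then have iv3: "P.indep_var U (\<lambda>X. X i) U (\<lambda>X. X j)" by (simp add: comp_def)
  have di: "distr (PiM (UNIV::nat set) (\<lambda>_. U)) U (\<lambda>X. X i) = U" by (intro distr_PiM_component U) auto
  have dj: "distr (PiM (UNIV::nat set) (\<lambda>_. U)) U (\<lambda>X. X j) = U" by (intro distr_PiM_component U) auto
  have joint: "distr (PiM (UNIV::nat set) (\<lambda>_. U)) (U \<Otimes>\<^sub>M U) (\<lambda>X. (X i, X j)) = U \<Otimes>\<^sub>M U"
    using iv3 unfolding P.indep_var_distribution_eq di dj by simp
  have setd: "{x \<in> space (U \<Otimes>\<^sub>M U). fst x \<noteq> snd x} \<in> sets (U \<Otimes>\<^sub>M U)"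
  proof -
    have "sets (U \<Otimes>\<^sub>M U) = sets (borel \<Otimes>\<^sub>M borel)" by (intro sets_pair_measure_cong sU)
    also have "\<dots> = sets (borel :: ('a \<times> 'a) measure)" by (simp only: borel_prod)
    finally have e: "sets (U \<Otimes>\<^sub>M U) = sets (borel :: ('a \<times> 'a) measure)" .
    have "open {x::'a \<times> 'a. fst x \<noteq> snd x}" by (intro open_Collect_neq continuous_intros)
    then have "{x::'a \<times> 'a. fst x \<noteq> snd x} \<in> sets borel" by (rule borel_open)
    moreover have "space (U \<Otimes>\<^sub>M U) = UNIV" using sets_eq_imp_space_eq[OF e] by simp
    ultimately show ?thesis using e by simp
  qed
  have "AE z in U \<Otimes>\<^sub>M U. fst z \<noteq> snd z"
  proof (rule UU.AE_pair_measure[OF setd])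
    show "AE x in U. AE y in U. fst (x, y) \<noteq> snd (x, y)"
    proof (rule AE_I2)
      fix x show "AE y in U. fst (x, y) \<noteq> snd (x, y)" using nat[of x] by eventually_elim auto
    qed
  qed
  then have ae1: "AE z in distr (PiM (UNIV::nat set) (\<lambda>_. U)) (U \<Otimes>\<^sub>M U) (\<lambda>X. (X i, X j)). fst z \<noteq> snd z"
    by (subst joint) (rule \<open>AE z in U \<Otimes>\<^sub>M U. fst z \<noteq> snd z\<close>)
  have me: "(\<lambda>X. (X i, X j)) \<in> measurable (PiM (UNIV::nat set) (\<lambda>_. U)) (U \<Otimes>\<^sub>M U)"
    by (intro measurable_Pair measurable_component_singleton) auto
  show ?thesis using AE_distrD[OF me ae1] by simp
qed



lemma DL4: "xs \<in> DL n 4 \<longleftrightarrow> (\<exists>a b c d. xs = [a,b,c,d] \<and> distinct [a,b,c,d] \<and> a < n \<and> b < n \<and> c < n \<and> d < n)"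
proof
  assume "xs \<in> DL n 4"
  then have l: "length xs = 4" and "distinct xs" "set xs \<subseteq> {..<n}" by (auto simp: DL_def)
  from l obtain a b c d where "xs = [a,b,c,d]" by (auto simp: length_Suc_conv numeral_eq_Suc)
  with \<open>distinct xs\<close> \<open>set xs \<subseteq> {..<n}\<close> show "\<exists>a b c d. xs = [a,b,c,d] \<and> distinct [a,b,c,d] \<and> a < n \<and> b < n \<and> c < n \<and> d < n"
    by auto
qed (auto simp: DL_def)

lemma DL2: "xs \<in> DL n 2 \<longleftrightarrow> (\<exists>a b. xs = [a,b] \<and> a \<noteq> b \<and> a < n \<and> b < n)"
proof
  assume "xs \<in> DL n 2"
  then have l: "length xs = 2" and "distinct xs" "set xs \<subseteq> {..<n}" by (auto simp: DL_def)
  from l obtain a b where "xs = [a,b]" by (auto simp: length_Suc_conv numeral_eq_Suc)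
  with \<open>distinct xs\<close> \<open>set xs \<subseteq> {..<n}\<close> show "\<exists>a b. xs = [a,b] \<and> a \<noteq> b \<and> a < n \<and> b < n"
    by auto
qed (auto simp: DL_def)

lemma crbar_eq:
  assumes inj: "inj_on X {..<n}"
  shows "crbar L \<delta> (X ` {..<n}) = (1/8) * (\<Sum>xs\<in>DL n 4. hk L \<delta> (X(xs!0), X(xs!1), X(xs!2), X(xs!3)))"
proof -
  let ?V = "X ` {..<n}"
  let ?Q = "{(v1,v2,v3,v4). v1 \<in> ?V \<and> v2 \<in> ?V \<and> v3 \<in> ?V \<and> v4 \<in> ?V \<and> distinct [v1,v2,v3,v4]}"
  let ?f = "\<lambda>(v1,v2,v3,v4). (if (oproj L ` closed_segment v1 v2) \<inter> (oproj L ` closed_segment v3 v4) \<noteq> {}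
         \<and> norm (v1 - v2) \<le> \<delta> \<and> norm (v3 - v4) \<le> \<delta> then 1 else 0::real)"
  let ?\<phi> = "\<lambda>xs. (X(xs!0), X(xs!1), X(xs!2), X(xs!3))"
  have injX: "X a = X b \<longleftrightarrow> a = b" if "a < n" "b < n" for a b
    using inj that by (auto dest: inj_onD)
  have bij: "bij_betw ?\<phi> (DL n 4) ?Q"
    unfolding bij_betw_def
  proof
    show "inj_on ?\<phi> (DL n 4)"
    proof (rule inj_onI)
      fix xs ys assume "xs \<in> DL n 4" "ys \<in> DL n 4" "?\<phi> xs = ?\<phi> ys"
      then show "xs = ys" unfolding DL4 using injX by auto
    qed
    show "?\<phi> ` DL n 4 = ?Q"
    proof (intro set_eqI iffI)
      fix q assume "q \<in> ?\<phi> ` DL n 4"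
      then obtain xs where "xs \<in> DL n 4" "q = ?\<phi> xs" by blast
      then obtain a b c d where "q = (X a, X b, X c, X d)" "distinct [a,b,c,d]" "a < n" "b < n" "c < n" "d < n"
        unfolding DL4 by auto
      then show "q \<in> ?Q" using injX by auto
    next
      fix q assume "q \<in> ?Q"
      then obtain a b c d where q: "q = (X a, X b, X c, X d)" and lt: "a < n" "b < n" "c < n" "d < n"
        and dq: "distinct [X a, X b, X c, X d]" by auto
      then have "[a,b,c,d] \<in> DL n 4" unfolding DL4 by auto
      moreover have "q = ?\<phi> [a,b,c,d]" using q by simp
      ultimately show "q \<in> ?\<phi> ` DL n 4" by blast
    qed
  qed
  have "crbar L \<delta> ?V = (1/8) * (\<Sum>q\<in>?Q. ?f q)" unfolding crbar_def by simp
  also have "(\<Sum>q\<in>?Q. ?f q) = (\<Sum>xs\<in>DL n 4. ?f (?\<phi> xs))"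
    by (rule sum.reindex_bij_betw[OF bij, symmetric])
  also have "\<dots> = (\<Sum>xs\<in>DL n 4. hk L \<delta> (?\<phi> xs))"
  proof (rule sum.cong[OF refl])
    fix xs assume "xs \<in> DL n 4"
    then have "distinct [X(xs!0), X(xs!1), X(xs!2), X(xs!3)]" unfolding DL4 using injX by auto
    then show "?f (?\<phi> xs) = hk L \<delta> (?\<phi> xs)" by (simp add: hk_def crossP_def)
  qed
  finally show ?thesis .
qed

definition sk :: "('a::euclidean_space \<Rightarrow> 'a \<Rightarrow> real) \<Rightarrow> 'a set \<Rightarrow> 'a set \<Rightarrow> 'a \<times> 'a \<Rightarrow> real" where
  "sk w L W = (\<lambda>(x,y). if x \<in> W \<and> y \<in> W \<and> x \<noteq> y then w x y * (norm (x - y) - norm (oproj L x - oproj L y))^2 else 0)"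

lemma stress_eq:
  assumes inj: "inj_on X {..<n}" and W: "X ` {..<n} \<subseteq> W"
  shows "stress w L (X ` {..<n}) = (1/2) * (\<Sum>xs\<in>DL n 2. sk w L W (X(xs!0), X(xs!1)))"
proof -
  let ?V = "X ` {..<n}"
  let ?Q = "{(v1,v2). v1 \<in> ?V \<and> v2 \<in> ?V \<and> v1 \<noteq> v2}"
  let ?f = "\<lambda>(v1,v2). w v1 v2 * (norm (v1 - v2) - norm (oproj L v1 - oproj L v2))^2"
  let ?\<phi> = "\<lambda>xs. (X(xs!0), X(xs!1))"
  have injX: "X a = X b \<longleftrightarrow> a = b" if "a < n" "b < n" for a b
    using inj that by (auto dest: inj_onD)
  have bij: "bij_betw ?\<phi> (DL n 2) ?Q"
    unfolding bij_betw_def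
  proof
    show "inj_on ?\<phi> (DL n 2)"
    proof (rule inj_onI)
      fix xs ys assume "xs \<in> DL n 2" "ys \<in> DL n 2" "?\<phi> xs = ?\<phi> ys"
      then show "xs = ys" unfolding DL2 using injX by auto
    qed
    show "?\<phi> ` DL n 2 = ?Q"
    proof (intro set_eqI iffI)
      fix q assume "q \<in> ?\<phi> ` DL n 2"
      then obtain xs where "xs \<in> DL n 2" "q = ?\<phi> xs" by blast
      then obtain a b where "q = (X a, X b)" "a \<noteq> b" "a < n" "b < n"
        unfolding DL2 by auto
      then show "q \<in> ?Q" using injX by auto
    next
      fix q assume "q \<in> ?Q"
      then obtain a b where q: "q = (X a, X b)" and lt: "a < n" "b < n" and dq: "X a \<noteq> X b" by auto
      then have "[a,b] \<in> DL n 2" unfolding DL2 by auto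
      moreover have "q = ?\<phi> [a,b]" using q by simp
      ultimately show "q \<in> ?\<phi> ` DL n 2" by blast
    qed
  qed
  have "stress w L ?V = (1/2) * (\<Sum>q\<in>?Q. ?f q)" unfolding stress_def by simp
  also have "(\<Sum>q\<in>?Q. ?f q) = (\<Sum>xs\<in>DL n 2. ?f (?\<phi> xs))"
    by (rule sum.reindex_bij_betw[OF bij, symmetric])
  also have "\<dots> = (\<Sum>xs\<in>DL n 2. sk w L W (?\<phi> xs))"
  proof (rule sum.cong[OF refl])
    fix xs assume "xs \<in> DL n 2"
    then obtain a b where xs: "xs = [a,b]" "a \<noteq> b" "a < n" "b < n" unfolding DL2 by auto
    then have "X a \<noteq> X b" "X a \<in> W" "X b \<in> W" using injX W by auto
    then show "?f (?\<phi> xs) = sk w L W (?\<phi> xs)" using xs by (simp add: sk_def)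
  qed
  finally show ?thesis .
qed

lemma sk_measurable:
  fixes w :: "'a::euclidean_space \<Rightarrow> 'a \<Rightarrow> real"
  assumes L: "subspace L" and Wc: "closed W" and wm: "(\<lambda>(x, y). w x y) \<in> borel_measurable borel"
  shows "sk w L W \<in> borel_measurable borel"
proof -
  have c: "(\<lambda>p::'a \<times> 'a. (norm (fst p - snd p) - norm (oproj L (fst p) - oproj L (snd p)))^2) \<in> borel_measurable borel"
    by (intro borel_measurable_continuous_onI continuous_intros L)
  have o: "open {p::'a \<times> 'a. fst p \<noteq> snd p}" by (intro open_Collect_neq continuous_intros)
  have S: "(W \<times> W) \<inter> {p::'a \<times> 'a. fst p \<noteq> snd p} \<in> sets borel"
    by (intro sets.Int borel_closed borel_open o closed_Times Wc)
  have eq: "sk w L W = (\<lambda>p. indicator ((W \<times> W) \<inter> {p. fst p \<noteq> snd p}) p * ((\<lambda>(x, y). w x y) p *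
      (norm (fst p - snd p) - norm (oproj L (fst p) - oproj L (snd p)))^2))"
    by (auto simp: sk_def fun_eq_iff split: split_indicator)
  show ?thesis unfolding eq
    by (intro borel_measurable_times borel_measurable_indicator S wm c)
qed

lemma sk_nonneg:
  assumes "\<forall>x\<in>W. \<forall>y\<in>W. w x y > 0" shows "0 \<le> sk w L W p"
proof (cases p)
  case (Pair a b)
  show ?thesis
  proof (cases "a \<in> W \<and> b \<in> W \<and> a \<noteq> b")
    case True
    then have "0 \<le> w a b" using assms by (auto intro: less_imp_le)
    then show ?thesis using True Pair by (simp add: sk_def)
  next
    case False
    then have "sk w L W p = 0" using Pair False by (auto simp: sk_def)
    then show ?thesis by simp
  qed
qed

lemma crbar_nonneg: "0 \<le> crbar L \<delta> V"
  unfolding crbar_def by (intro mult_nonneg_nonneg sum_nonneg) (auto split: prod.splits)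



lemma lift_AE_snd:
  assumes "pair_sigma_finite M1 M2" and ae: "AE y in M2. Q y"
  shows "AE x in M1 \<Otimes>\<^sub>M M2. Q (snd x)"
proof -
  interpret pair_sigma_finite M1 M2 by fact
  from ae obtain N where N: "{x \<in> space M2. \<not> Q x} \<subseteq> N" "emeasure M2 N = 0" "N \<in> sets M2"
    by (rule AE_E)
  have "space M1 \<times> N \<in> null_sets (M1 \<Otimes>\<^sub>M M2)"
    using N by (simp add: M2.emeasure_pair_measure_Times null_sets_def)
  moreover have "{x \<in> space (M1 \<Otimes>\<^sub>M M2). \<not> Q (snd x)} \<subseteq> space M1 \<times> N"
    using N by (auto simp: space_pair_measure)
  ultimately show ?thesis by (rule AE_I')
qed

lemma card_DL4_le: "real (card (DL n 4)) \<le> real n ^ 4"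
proof -
  have "card (DL n 4) \<le> card {xs. set xs \<subseteq> {..<n} \<and> length xs = 4}"
    by (intro card_mono) (auto simp: DL_def intro: finite_lists_length_eq)
  also have "\<dots> = n ^ 4" by (simp add: card_lists_length_eq)
  finally show ?thesis by (metis of_nat_le_iff of_nat_power)
qed



theorem theorem5:
  fixes W L :: "'a::euclidean_space set" and t \<delta> :: real and w :: "'a \<Rightarrow> 'a \<Rightarrow> real"
  assumes "DIM('a) \<ge> 2"
    and "compact W" and "convex W" and "emeasure lborel W = 1"
    and "t > 0" and "\<delta> > 0"
    and "(\<lambda>(x, y). w x y) \<in> borel_measurable borel"
    and "\<forall>x\<in>W. \<forall>y\<in>W. w x y > 0"
    and "subspace L" and "dim L = 2"
    and "(\<lambda>\<omega>. stress w L (pp_points \<omega>)) \<in> borel_measurable (pp_space t W)"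
    and "integrable (pp_space t W) (\<lambda>\<omega>. (stress w L (pp_points \<omega>))^2)"
  shows "(\<integral>\<omega>. crbar L \<delta> (pp_points \<omega>) * stress w L (pp_points \<omega>) \<partial>pp_space t W)
         \<ge> (\<integral>\<omega>. crbar L \<delta> (pp_points \<omega>) \<partial>pp_space t W) * (\<integral>\<omega>. stress w L (pp_points \<omega>) \<partial>pp_space t W)"
proof -
  note W1 = assms(4) and t = assms(5) and wm = assms(7) and wpos = assms(8) and L = assms(9)
  define U where "U = uniform_measure lborel W"
  define P where "P = measure_pmf (poisson_pmf t)"
  define h where "h = hk L \<delta>"
  define s where "s = sk w L W"
  have Wc: "closed W" using assms(2) by (rule compact_imp_closed)
  have Wb: "W \<in> sets lborel" using borel_closed[OF Wc] by simp
  have U: "prob_space U" unfolding U_def by (rule prob_space_uniform_measure) (use W1 in simp_all)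
  have sU: "sets U = sets borel" unfolding U_def by simp
  have natU: "AE x in U. x \<noteq> c" for c
    unfolding U_def using W1 AE_lborel_singleton[of c] by (subst AE_uniform_measure) (auto elim: AE_mp)
  have inWU: "AE x in U. x \<in> W"
    unfolding U_def using W1 by (subst AE_uniform_measure) auto
  have hm: "h \<in> borel_measurable borel" unfolding h_def by (rule hk_measurable[OF L])
  have sm: "s \<in> borel_measurable borel" unfolding s_def by (rule sk_measurable[OF L Wc wm])
  have hn: "\<And>q. 0 \<le> h q" unfolding h_def by (rule hk_nonneg)
  have h1: "\<And>q. h q \<le> 1" unfolding h_def by (rule hk_le1)
  have sn: "\<And>q. 0 \<le> s q" unfolding s_def by (rule sk_nonneg[OF wpos])
  note ctx = U sU hm sm hn sn
  interpret Pi: prob_space "PiM (UNIV::nat set) (\<lambda>_. U)" by (intro prob_space_PiM U)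
  interpret PP: prob_space P unfolding P_def by (rule prob_space_measure_pmf)
  interpret PPi: pair_sigma_finite P "PiM (UNIV::nat set) (\<lambda>_. U)"
    by (simp add: pair_sigma_finite_def PP.sigma_finite_measure_axioms Pi.sigma_finite_measure_axioms)
  have Mdef: "pp_space t W = P \<Otimes>\<^sub>M PiM (UNIV::nat set) (\<lambda>_. U)"
    unfolding pp_space_def P_def U_def by simp
  let ?M = "P \<Otimes>\<^sub>M PiM (UNIV::nat set) (\<lambda>_. U)"
  interpret M: prob_space ?M by (intro prob_space_pair) (unfold_locales)
  define C2 where "C2 = (\<lambda>\<omega>::nat \<times> (nat \<Rightarrow> 'a). \<Sum>xs\<in>DL (fst \<omega>) 4. h (snd \<omega> (xs!0), snd \<omega> (xs!1), snd \<omega> (xs!2), snd \<omega> (xs!3)))"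
  define S2 where "S2 = (\<lambda>\<omega>::nat \<times> (nat \<Rightarrow> 'a). \<Sum>xs\<in>DL (fst \<omega>) 2. s (snd \<omega> (xs!0), snd \<omega> (xs!1)))"
  have fstm: "fst \<in> measurable ?M (count_space UNIV)"
    by (rule measurable_fst''[where f="\<lambda>x. x", simplified]) (simp add: P_def)
  have C2m: "C2 \<in> borel_measurable ?M"
  proof -
    have "(\<lambda>\<omega>. (\<lambda>n \<omega>. \<Sum>xs\<in>DL n 4. h (snd \<omega> (xs!0), snd \<omega> (xs!1), snd \<omega> (xs!2), snd \<omega> (xs!3))) (fst \<omega>) \<omega>) \<in> borel_measurable ?M"
    proof (rule measurable_compose_countable'[OF _ fstm])
      fix n :: nat
      show "(\<lambda>\<omega>. \<Sum>xs\<in>DL n 4. h (snd \<omega> (xs!0), snd \<omega> (xs!1), snd \<omega> (xs!2), snd \<omega> (xs!3))) \<in> borel_measurable ?M"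
        by (intro borel_measurable_sum measurable_compose[OF measurable_snd h_meas[OF ctx]]) auto
    qed auto
    then show ?thesis by (simp add: C2_def)
  qed
  have S2m: "S2 \<in> borel_measurable ?M"
  proof -
    have "(\<lambda>\<omega>. (\<lambda>n \<omega>. \<Sum>xs\<in>DL n 2. s (snd \<omega> (xs!0), snd \<omega> (xs!1))) (fst \<omega>) \<omega>) \<in> borel_measurable ?M"
    proof (rule measurable_compose_countable'[OF _ fstm])
      fix n :: nat
      show "(\<lambda>\<omega>. \<Sum>xs\<in>DL n 2. s (snd \<omega> (xs!0), snd \<omega> (xs!1))) \<in> borel_measurable ?M"
        by (intro borel_measurable_sum measurable_compose[OF measurable_snd s_meas[OF ctx]]) auto
    qed auto
    then show ?thesis by (simp add: S2_def)
  qed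
  have C2n: "0 \<le> C2 \<omega>" for \<omega> unfolding C2_def by (intro sum_nonneg hn)
  have S2n: "0 \<le> S2 \<omega>" for \<omega> unfolding S2_def by (intro sum_nonneg sn)
  have AEinj: "AE X in PiM (UNIV::nat set) (\<lambda>_. U). \<forall>ij::nat\<times>nat. fst ij \<noteq> snd ij \<longrightarrow> X (fst ij) \<noteq> X (snd ij)"
  proof (subst AE_all_countable, intro allI)
    fix ij :: "nat \<times> nat"
    show "AE X in PiM (UNIV::nat set) (\<lambda>_. U). fst ij \<noteq> snd ij \<longrightarrow> X (fst ij) \<noteq> X (snd ij)"
    proof (cases "fst ij = snd ij")
      case False
      show ?thesis using AE_diag[OF U sU natU False] by (rule AE_mp) simp
    qed simp
  qed
  have AEW: "AE X in PiM (UNIV::nat set) (\<lambda>_. U). \<forall>i. X i \<in> W"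
  proof (subst AE_all_countable, intro allI)
    fix i :: nat
    show "AE X in PiM (UNIV::nat set) (\<lambda>_. U). X i \<in> W"
      by (rule AE_PiM_component[where P="\<lambda>x. x \<in> W"]) (use U inWU in auto)
  qed
  have AEgood: "AE \<omega> in ?M. inj (snd \<omega>) \<and> range (snd \<omega>) \<subseteq> W"
  proof (rule lift_AE_snd)
    show "pair_sigma_finite P (PiM (UNIV::nat set) (\<lambda>_. U))" by unfold_locales
    show "AE X in PiM (UNIV::nat set) (\<lambda>_. U). inj X \<and> range X \<subseteq> W"
      using AEinj AEW
    proof eventually_elim
      case (elim X)
      then show ?case by (auto simp: inj_def)
    qed
  qed
  have AEC: "AE \<omega> in ?M. crbar L \<delta> (pp_points \<omega>) = C2 \<omega> / 8"
    using AEgood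
  proof eventually_elim
    case (elim \<omega>)
    then have "inj_on (snd \<omega>) {..<fst \<omega>}" by (auto intro: inj_on_subset)
    from crbar_eq[OF this, of L \<delta>] show ?case by (simp add: pp_points_def C2_def h_def)
  qed
  have AES: "AE \<omega> in ?M. stress w L (pp_points \<omega>) = S2 \<omega> / 2"
    using AEgood
  proof eventually_elim
    case (elim \<omega>)
    then have "inj_on (snd \<omega>) {..<fst \<omega>}" "snd \<omega> ` {..<fst \<omega>} \<subseteq> W" by (auto intro: inj_on_subset)
    from stress_eq[OF this, of w L] show ?case by (simp add: pp_points_def S2_def s_def)
  qed
  have fub: "(\<integral>\<^sup>+\<omega>. f \<omega> \<partial>?M) = (\<integral>\<^sup>+n. \<integral>\<^sup>+X. f (n, X) \<partial>PiM (UNIV::nat set) (\<lambda>_. U) \<partial>P)"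
    if "f \<in> borel_measurable ?M" for f
    using Pi.nn_integral_fst[OF that] by simp
  have ofn: "(of_nat m :: ennreal) = ennreal (real m)" for m by (simp add: ennreal_of_nat_eq_real_of_nat)
  have nnC: "(\<integral>\<^sup>+\<omega>. ennreal (C2 \<omega>) \<partial>?M) = ennreal (t ^ 4) * HH U h"
  proof -
    have "(\<integral>\<^sup>+\<omega>. ennreal (C2 \<omega>) \<partial>?M) = (\<integral>\<^sup>+n. \<integral>\<^sup>+X. ennreal (C2 (n, X)) \<partial>PiM (UNIV::nat set) (\<lambda>_. U) \<partial>P)"
      by (rule fub) (rule measurable_compose[OF C2m measurable_ennreal])
    also have "\<dots> = (\<integral>\<^sup>+n. of_nat (card (DL n 4)) * HH U h \<partial>P)"
      by (intro nn_integral_cong) (simp only: C2_def fst_conv snd_conv int_sum4[OF ctx])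
    also have "\<dots> = (\<integral>\<^sup>+n. ennreal (real (card (DL n 4))) \<partial>P) * HH U h"
      by (simp add: ofn nn_integral_multc P_def)
    also have "\<dots> = ennreal (t ^ 4) * HH U h" unfolding P_def by (simp add: pois_mom[OF t])
    finally show ?thesis .
  qed
  have nnS: "(\<integral>\<^sup>+\<omega>. ennreal (S2 \<omega>) \<partial>?M) = ennreal (t ^ 2) * SS U s"
  proof -
    have "(\<integral>\<^sup>+\<omega>. ennreal (S2 \<omega>) \<partial>?M) = (\<integral>\<^sup>+n. \<integral>\<^sup>+X. ennreal (S2 (n, X)) \<partial>PiM (UNIV::nat set) (\<lambda>_. U) \<partial>P)"
      by (rule fub) (rule measurable_compose[OF S2m measurable_ennreal])
    also have "\<dots> = (\<integral>\<^sup>+n. of_nat (card (DL n 2)) * SS U s \<partial>P)"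
      by (intro nn_integral_cong) (simp only: S2_def fst_conv snd_conv int_sum2[OF ctx])
    also have "\<dots> = (\<integral>\<^sup>+n. ennreal (real (card (DL n 2))) \<partial>P) * SS U s"
      by (simp add: ofn nn_integral_multc P_def)
    also have "\<dots> = ennreal (t ^ 2) * SS U s" unfolding P_def by (simp add: pois_mom[OF t])
    finally show ?thesis .
  qed
  have nnCS: "ennreal (t ^ 6) * (HH U h * SS U s) \<le> (\<integral>\<^sup>+\<omega>. ennreal (C2 \<omega> * S2 \<omega>) \<partial>?M)"
  proof -
    have "ennreal (t ^ 6) * (HH U h * SS U s) = (\<integral>\<^sup>+n. ennreal (real (card (DL n 6))) \<partial>P) * (HH U h * SS U s)"
      unfolding P_def by (simp add: pois_mom[OF t])
    also have "\<dots> = (\<integral>\<^sup>+n. of_nat (card (DL n 6)) * HH U h * SS U s \<partial>P)"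
      by (simp add: ofn nn_integral_multc P_def mult.assoc)
    also have "\<dots> \<le> (\<integral>\<^sup>+n. \<integral>\<^sup>+X. ennreal (C2 (n, X) * S2 (n, X)) \<partial>PiM (UNIV::nat set) (\<lambda>_. U) \<partial>P)"
      by (intro nn_integral_mono) (simp only: C2_def S2_def fst_conv snd_conv int_prod[OF ctx])
    also have "\<dots> = (\<integral>\<^sup>+\<omega>. ennreal (C2 \<omega> * S2 \<omega>) \<partial>?M)"
      by (rule fub[symmetric]) (rule measurable_compose[OF borel_measurable_times[OF C2m S2m] measurable_ennreal])
    finally show ?thesis .
  qed
  define Cr where "Cr = (\<lambda>\<omega>::nat \<times> (nat \<Rightarrow> 'a). crbar L \<delta> (pp_points \<omega>))"
  define St where "St = (\<lambda>\<omega>::nat \<times> (nat \<Rightarrow> 'a). stress w L (pp_points \<omega>))"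
  have Stm: "St \<in> borel_measurable ?M" using assms(11) unfolding Mdef St_def .
  have St2: "integrable ?M (\<lambda>\<omega>. (St \<omega>)^2)" using assms(12) unfolding Mdef St_def .
  have StI: "integrable ?M St" by (rule M.square_integrable_imp_integrable[OF Stm St2])
  have S2I: "integrable ?M S2"
  proof -
    have "integrable ?M (\<lambda>\<omega>. 2 * St \<omega>)" using StI by simp
    moreover have "AE \<omega> in ?M. 2 * St \<omega> = S2 \<omega>" using AES by eventually_elim (simp add: St_def)
    ultimately show ?thesis using integrable_cong_AE[of "\<lambda>\<omega>. 2 * St \<omega>" ?M S2] Stm S2m by simp
  qed
  have HHle: "HH U h \<le> 1"
  proof -
    have "HH U h \<le> (\<integral>\<^sup>+X. 1 \<partial>PiM (UNIV::nat set) (\<lambda>_. U))"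
      unfolding HH_def[OF ctx] by (intro nn_integral_mono) (simp add: h1)
    also have "\<dots> = 1" by (simp add: Pi.emeasure_space_1)
    finally show ?thesis .
  qed
  then have HHfin: "HH U h = ennreal (enn2real (HH U h))"
    by (intro ennreal_enn2real[symmetric]) (use le_less_trans[OF _ ennreal_less_top[of 1]] in simp)
  have C2I: "integrable ?M C2"
  proof (rule integrableI_nn_integral_finite[OF C2m])
    show "AE x in ?M. 0 \<le> C2 x" by (simp add: C2n)
    show "(\<integral>\<^sup>+\<omega>. ennreal (C2 \<omega>) \<partial>?M) = ennreal (t ^ 4 * enn2real (HH U h))"
      unfolding nnC by (subst HHfin) (simp add: ennreal_mult t)
  qed
  have C2le: "C2 \<omega> \<le> real (fst \<omega>) ^ 4" for \<omega>
  proof -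
    have "C2 \<omega> \<le> (\<Sum>xs\<in>DL (fst \<omega>) 4. 1)" unfolding C2_def by (intro sum_mono h1)
    also have "\<dots> = real (card (DL (fst \<omega>) 4))" by simp
    also have "\<dots> \<le> real (fst \<omega>) ^ 4" by (rule card_DL4_le)
    finally show ?thesis .
  qed
  have CSI: "integrable ?M (\<lambda>\<omega>. C2 \<omega> * S2 \<omega>)"
  proof (subst integrable_iff_bounded, intro conjI)
    show "(\<lambda>\<omega>. C2 \<omega> * S2 \<omega>) \<in> borel_measurable ?M" using C2m S2m by (rule borel_measurable_times)
    have S2sq: "integrable ?M (\<lambda>\<omega>. (S2 \<omega>)^2)"
    proof -
      have "integrable ?M (\<lambda>\<omega>. 4 * (St \<omega>)^2)" using St2 by simp
      moreover have "AE \<omega> in ?M. 4 * (St \<omega>)^2 = (S2 \<omega>)^2" using AES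
      proof eventually_elim
        case (elim \<omega>)
        then have "S2 \<omega> = 2 * St \<omega>" by (simp add: St_def)
        then show ?case by (simp add: power_mult_distrib)
      qed
      moreover have "(\<lambda>\<omega>. 4 * (St \<omega>)^2) \<in> borel_measurable ?M" using Stm by (intro borel_measurable_times borel_measurable_power borel_measurable_const)
      moreover have "(\<lambda>\<omega>. (S2 \<omega>)^2) \<in> borel_measurable ?M" using S2m by (rule borel_measurable_power)
      ultimately show ?thesis using integrable_cong_AE[of "\<lambda>\<omega>. 4 * (St \<omega>)^2" ?M "\<lambda>\<omega>. (S2 \<omega>)^2"] by simp
    qed
    then have fS: "(\<integral>\<^sup>+\<omega>. ennreal ((S2 \<omega>)^2) \<partial>?M) < \<infinity>"
      by (simp add: integrable_iff_bounded)
    have fC: "(\<integral>\<^sup>+\<omega>. ennreal ((C2 \<omega>)^2) \<partial>?M) < \<infinity>"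
    proof -
      have "(\<integral>\<^sup>+\<omega>. ennreal ((C2 \<omega>)^2) \<partial>?M) \<le> (\<integral>\<^sup>+\<omega>. ennreal (real (fst \<omega>) ^ 8) \<partial>?M)"
      proof (intro nn_integral_mono ennreal_leI)
        fix \<omega> :: "nat \<times> (nat \<Rightarrow> 'a)"
        have "(C2 \<omega>)^2 \<le> (real (fst \<omega>) ^ 4)^2" by (intro power_mono C2le C2n)
        then show "(C2 \<omega>)^2 \<le> real (fst \<omega>) ^ 8" by (simp add: power_mult[symmetric])
      qed
      also have "\<dots> = (\<integral>\<^sup>+n. \<integral>\<^sup>+X. ennreal (real n ^ 8) \<partial>PiM (UNIV::nat set) (\<lambda>_. U) \<partial>P)"
      proof -
        have "(\<lambda>\<omega>. ennreal (real (fst \<omega>) ^ 8)) \<in> borel_measurable ?M" by (rule measurable_compose[OF fstm]) simp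
        from fub[OF this] show ?thesis by simp
      qed
      also have "\<dots> = (\<integral>\<^sup>+n. ennreal (real n ^ 8) \<partial>P)"
        by (simp add: Pi.emeasure_space_1)
      also have "\<dots> < \<infinity>" unfolding P_def by (rule pois_pow_finite[OF t])
      finally show ?thesis .
    qed
    have "(\<integral>\<^sup>+\<omega>. ennreal (norm (C2 \<omega> * S2 \<omega>)) \<partial>?M) \<le> (\<integral>\<^sup>+\<omega>. ennreal ((C2 \<omega>)^2) + ennreal ((S2 \<omega>)^2) \<partial>?M)"
    proof (intro nn_integral_mono)
      fix \<omega> :: "nat \<times> (nat \<Rightarrow> 'a)"
      have cs0: "0 \<le> C2 \<omega> * S2 \<omega>" using C2n[of \<omega>] S2n[of \<omega>] by simp
      have "0 \<le> (C2 \<omega> - S2 \<omega>)^2" by simp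
      then have "2 * (C2 \<omega> * S2 \<omega>) \<le> (C2 \<omega>)^2 + (S2 \<omega>)^2" by (simp add: power2_diff)
      with cs0 have "norm (C2 \<omega> * S2 \<omega>) \<le> (C2 \<omega>)^2 + (S2 \<omega>)^2" by simp
      then have "ennreal (norm (C2 \<omega> * S2 \<omega>)) \<le> ennreal ((C2 \<omega>)^2 + (S2 \<omega>)^2)" by (rule ennreal_leI)
      also have "\<dots> = ennreal ((C2 \<omega>)^2) + ennreal ((S2 \<omega>)^2)" by (rule ennreal_plus) simp_all
      finally show "ennreal (norm (C2 \<omega> * S2 \<omega>)) \<le> ennreal ((C2 \<omega>)^2) + ennreal ((S2 \<omega>)^2)" .
    qed
    also have "\<dots> = (\<integral>\<^sup>+\<omega>. ennreal ((C2 \<omega>)^2) \<partial>?M) + (\<integral>\<^sup>+\<omega>. ennreal ((S2 \<omega>)^2) \<partial>?M)"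
      by (rule nn_integral_add)
        (intro measurable_compose[OF borel_measurable_power[OF C2m] measurable_ennreal]
          measurable_compose[OF borel_measurable_power[OF S2m] measurable_ennreal])+
    also have "\<dots> < \<infinity>" using fC fS by simp
    finally show "(\<integral>\<^sup>+\<omega>. ennreal (norm (C2 \<omega> * S2 \<omega>)) \<partial>?M) < \<infinity>" .
  qed
  define A2 where "A2 = (\<integral>\<omega>. C2 \<omega> \<partial>?M)"
  define B2 where "B2 = (\<integral>\<omega>. S2 \<omega> \<partial>?M)"
  define AB where "AB = (\<integral>\<omega>. C2 \<omega> * S2 \<omega> \<partial>?M)"
  have eA: "ennreal A2 = ennreal (t ^ 4) * HH U h"
    unfolding A2_def using nn_integral_eq_integral[OF C2I] C2n nnC by simp
  have eB: "ennreal B2 = ennreal (t ^ 2) * SS U s"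
    unfolding B2_def using nn_integral_eq_integral[OF S2I] S2n nnS by simp
  have eAB: "ennreal AB = (\<integral>\<^sup>+\<omega>. ennreal (C2 \<omega> * S2 \<omega>) \<partial>?M)"
    unfolding AB_def using nn_integral_eq_integral[OF CSI] C2n S2n by simp
  have A2n: "0 \<le> A2" unfolding A2_def by (intro integral_nonneg_AE) (simp add: C2n)
  have B2n: "0 \<le> B2" unfolding B2_def by (intro integral_nonneg_AE) (simp add: S2n)
  have ABn: "0 \<le> AB" unfolding AB_def by (intro integral_nonneg_AE) (simp add: C2n S2n)
  have "ennreal (A2 * B2) = ennreal A2 * ennreal B2" using A2n B2n by (simp add: ennreal_mult)
  also have "\<dots> = ennreal (t ^ 4) * ennreal (t ^ 2) * (HH U h * SS U s)" unfolding eA eB by (simp add: ac_simps)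
  also have "\<dots> = ennreal (t ^ 6) * (HH U h * SS U s)"
    using t by (simp add: ennreal_mult[symmetric] power_add[symmetric])
  also have "\<dots> \<le> ennreal AB" unfolding eAB by (rule nnCS)
  finally have key: "A2 * B2 \<le> AB" using ABn by (simp add: ennreal_le_iff)
  have intSt: "(\<integral>\<omega>. St \<omega> \<partial>?M) = B2 / 2"
  proof -
    have "(\<integral>\<omega>. St \<omega> \<partial>?M) = (\<integral>\<omega>. S2 \<omega> / 2 \<partial>?M)"
      by (rule integral_cong_AE[OF Stm]) (use S2m AES in \<open>simp_all add: St_def\<close>)
    then show ?thesis by (simp add: B2_def)
  qed
  have StAE: "AE \<omega> in ?M. 0 \<le> St \<omega>" using AES
  proof eventually_elim
    case (elim \<omega>)
    then show ?case using S2n[of \<omega>] by (simp add: St_def)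
  qed
  have goal: "(\<integral>\<omega>. Cr \<omega> * St \<omega> \<partial>?M) \<ge> (\<integral>\<omega>. Cr \<omega> \<partial>?M) * (\<integral>\<omega>. St \<omega> \<partial>?M)"
  proof (cases "Cr \<in> borel_measurable ?M")
    case True
    have intC: "(\<integral>\<omega>. Cr \<omega> \<partial>?M) = A2 / 8"
    proof -
      have "(\<integral>\<omega>. Cr \<omega> \<partial>?M) = (\<integral>\<omega>. C2 \<omega> / 8 \<partial>?M)"
        by (rule integral_cong_AE[OF True]) (use C2m AEC in \<open>simp_all add: Cr_def\<close>)
      then show ?thesis by (simp add: A2_def)
    qed
    have intCS: "(\<integral>\<omega>. Cr \<omega> * St \<omega> \<partial>?M) = AB / 16"
    proof -
      have "(\<integral>\<omega>. Cr \<omega> * St \<omega> \<partial>?M) = (\<integral>\<omega>. (C2 \<omega> * S2 \<omega>) / 16 \<partial>?M)"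
      proof (rule integral_cong_AE)
        show "(\<lambda>\<omega>. Cr \<omega> * St \<omega>) \<in> borel_measurable ?M" using True Stm by (rule borel_measurable_times)
        show "(\<lambda>\<omega>. C2 \<omega> * S2 \<omega> / 16) \<in> borel_measurable ?M"
          using borel_measurable_times[OF C2m S2m] by simp
        show "AE \<omega> in ?M. Cr \<omega> * St \<omega> = C2 \<omega> * S2 \<omega> / 16"
          using AEC AES
        proof eventually_elim
          case (elim \<omega>)
          then have "C2 \<omega> = 8 * Cr \<omega>" "S2 \<omega> = 2 * St \<omega>" by (simp_all add: Cr_def St_def)
          then show ?case by simp
        qed
      qed
      then show ?thesis by (simp add: AB_def)
    qed
    show ?thesis unfolding intC intSt intCS using key by simp
  next
    case False
    then have "\<not> integrable ?M Cr" using borel_measurable_integrable by blast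
    then have "(\<integral>\<omega>. Cr \<omega> \<partial>?M) = 0" by (rule not_integrable_integral_eq)
    moreover have "0 \<le> (\<integral>\<omega>. Cr \<omega> * St \<omega> \<partial>?M)"
      by (intro integral_nonneg_AE) (use StAE in \<open>eventually_elim, simp add: Cr_def crbar_nonneg\<close>)
    ultimately show ?thesis by simp
  qed
  then show ?thesis unfolding Mdef Cr_def St_def by simp
qed

end
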